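(* Let $A,B\in\mathbb{C}^{m\times m}$ with $A$ nonsingular, and $M=ABA^{-1}$. (f) The following are equivalent: $\{M^{(1,3,4)}\}\cap\{AB^{(1,3,4)}A^{-1}\}\neq\emptyset$; $\{M^{(1,3,4)}\}=\{AB^{(1,3,4)}A^{-1}\}$; $AB^\dagger A^{-1}\in\{M^{(1,3,4)}\}$; $M^\dagger\in\{AB^{(1,3,4)}A^{-1}\}$; $M^\dagger=AB^\dagger A^{-1}$; $\mathscr{R}(A^*AB)=\mathscr{R}(B)$ and $\mathscr{R}(A^*AB^* )=\mathscr{R}(B^* )$. (g) If moreover $A^*A=I_m$, then $\{(ABA^* )^{(\tau)}\}=\{AB^{(\tau)}A^*\}$ for each of the types $\tau=(1),(1,2),(1,3),(1,4),(1,2,3),(1,2,4),(1,3,4)$, and $(ABA^* )^\dagger=AB^\dagger A^*$.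
   Context: For a complex matrix $X$, $X^*$ is its conjugate transpose and $\mathscr{R}(X)$ its column space. For $X\in\mathbb{C}^{p\times q}$, a matrix $G\in\mathbb{C}^{q\times p}$ is called an $\{i,\ldots,j\}$-generalized inverse of $X$ (written $X^{(i,\ldots,j)}$) if it satisfies the equations numbered $i,\ldots,j$ among the four Penrose equations (i) $XGX=X$, (ii) $GXG=G$, (iii) $(XG)^*=XG$, (iv) $(GX)^*=GX$; $\{X^{(i,\ldots,j)}\}$ denotes the set of all such $G$. The Moore–Penrose inverse $X^\dagger$ is the unique matrix satisfying all four equations. $\{AB^{(\tau)}A^{-1}\}:=\{AGA^{-1}:G\in\{B^{(\tau)}\}\}$, and similarly with $A^*$ in place of $A^{-1}$. *)

theory Defs
  imports "HOL-Analysis.Analysis"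
begin

definition cadj :: "complex^'n^'m \<Rightarrow> complex^'m^'n" where
  "cadj X = (\<chi> i j. cnj (X $ j $ i))"

definition colspace :: "complex^'n^'m \<Rightarrow> (complex^'m) set" where
  "colspace X = range (\<lambda>v. X *v v)"

definition penrose :: "nat set \<Rightarrow> complex^'n^'m \<Rightarrow> complex^'m^'n \<Rightarrow> bool" where
  "penrose S X G \<longleftrightarrow>
     (1 \<in> S \<longrightarrow> X ** G ** X = X) \<and>
     (2 \<in> S \<longrightarrow> G ** X ** G = G) \<and>
     (3 \<in> S \<longrightarrow> cadj (X ** G) = X ** G) \<and>
     (4 \<in> S \<longrightarrow> cadj (G ** X) = G ** X)"

definition ginvs :: "nat set \<Rightarrow> complex^'n^'m \<Rightarrow> (complex^'m^'n) set" where
  "ginvs S X = {G. penrose S X G}"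

definition mpinv :: "complex^'n^'m \<Rightarrow> complex^'m^'n" where
  "mpinv X = (THE G. penrose {1,2,3,4} X G)"

end

theory Submission
  imports Defs
begin


lemma cadj_mult: "cadj (X ** Y) = cadj Y ** cadj X"
  by (simp add: cadj_def matrix_matrix_mult_def vec_eq_iff mult.commute)

lemma cadj_cadj[simp]: "cadj (cadj X) = X"
  by (simp add: cadj_def vec_eq_iff)

lemma cadj_id[simp]: "cadj (mat 1 :: complex^'n^'n) = mat 1"
  by (simp add: cadj_def mat_def vec_eq_iff)

lemma cadj_diff: "cadj (X - Y) = cadj X - cadj Y"
  by (simp add: cadj_def vec_eq_iff)

lemma matrix_sub_ldistrib: "(A::'a::ring_1^'n^'m) ** (B - C) = A ** B - A ** C"
  by (simp add: matrix_matrix_mult_def vec_eq_iff sum_subtractf algebra_simps)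

lemma matrix_sub_rdistrib: "((A::'a::ring_1^'n^'m) - B) ** C = A ** C - B ** C"
  by (simp add: matrix_matrix_mult_def vec_eq_iff sum_subtractf algebra_simps)

lemma cadj_zero:
  fixes E :: "complex^'n^'m"
  assumes "cadj E ** E = 0" shows "E = 0"
proof -
  have "E $ k $ i = 0" for k i
  proof -
    have "(cadj E ** E) $ i $ i = 0" using assms by simp
    hence "(\<Sum>k\<in>UNIV. cnj (E$k$i) * E$k$i) = 0"
      by (simp add: matrix_matrix_mult_def cadj_def)
    hence "(\<Sum>k\<in>UNIV. complex_of_real ((norm (E$k$i))^2)) = 0"
      apply (simp only: complex_norm_square)
      by (simp add: mult.commute)
    hence "(\<Sum>k\<in>UNIV. (norm (E$k$i))^2) = 0"
      by (metis of_real_eq_0_iff of_real_sum)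
    hence "(norm (E$k$i))^2 = 0"
      by (subst (asm) sum_nonneg_eq_0_iff) auto
    thus ?thesis by simp
  qed
  thus ?thesis by (simp add: vec_eq_iff)
qed

lemma g1_exists:
  fixes S :: "complex^'n^'m"
  shows "\<exists>T. S ** T ** S = S"
proof -
  obtain g where g: "Vector_Spaces.linear (*s) (*s) g"
     "\<forall>v\<in>range ((*v) S). S *v g v = v"
    using vec.linear_exists_right_inverse_on[OF matrix_vector_mul_linear_gen vec.subspace_UNIV, of S]
    by auto
  have "(S ** matrix g ** S) *v x = S *v x" for x
    using g by (simp add: matrix_vector_mul_assoc[symmetric] matrix_works)
  thus ?thesis by (auto simp: matrix_eq)
qed

lemma g13_exists:
  fixes X :: "complex^'n^'m"
  shows "\<exists>G. X ** G ** X = X \<and> cadj (X ** G) = X ** G"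
proof -
  define S where "S = cadj X ** X"
  obtain T where T: "S ** T ** S = S" using g1_exists by blast
  have cS: "cadj S = S" by (simp add: S_def cadj_mult)
  define E where "E = X ** T ** S - X"
  have XE: "cadj X ** E = 0"
    unfolding E_def matrix_sub_ldistrib
    using T by (simp add: S_def matrix_mul_assoc)
  have "cadj E ** E = cadj S ** cadj T ** (cadj X ** E) - cadj X ** E"
    by (simp add: E_def cadj_diff cadj_mult matrix_sub_rdistrib matrix_mul_assoc)
  hence "cadj E ** E = 0" using XE by simp
  hence L: "X ** T ** S = X" using cadj_zero[of E] by (simp add: E_def)
  have L': "cadj X = S ** cadj T ** cadj X"
    using arg_cong[OF L, of cadj] by (simp add: cadj_mult cS matrix_mul_assoc)
  have h1: "X ** (T ** cadj X) ** X = X"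
    using L by (simp add: S_def matrix_mul_assoc)
  have "X ** (T ** cadj X) = X ** T ** (S ** cadj T ** cadj X)"
    using L' by (simp add: matrix_mul_assoc)
  also have "\<dots> = (X ** T ** S) ** cadj T ** cadj X" by (simp add: matrix_mul_assoc)
  also have "\<dots> = cadj (X ** (T ** cadj X))" using L by (simp add: cadj_mult matrix_mul_assoc)
  finally show ?thesis using h1 by metis
qed

lemma g14_exists:
  fixes X :: "complex^'n^'m"
  shows "\<exists>G. X ** G ** X = X \<and> cadj (G ** X) = G ** X"
proof -
  obtain K where K: "cadj X ** K ** cadj X = cadj X" "cadj (cadj X ** K) = cadj X ** K"
    using g13_exists[of "cadj X"] by blast
  have "X ** cadj K ** X = X" using arg_cong[OF K(1), of cadj] by (simp add: cadj_mult matrix_mul_assoc)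
  moreover have "cadj (cadj K ** X) = cadj K ** X"
    using K(2) by (metis cadj_cadj cadj_mult)
  ultimately show ?thesis by blast
qed

lemma mp_exists:
  fixes X :: "complex^'n^'m"
  shows "\<exists>G. penrose {1,2,3,4} X G"
proof -
  obtain G3 where G3: "X ** G3 ** X = X" "cadj (X ** G3) = X ** G3" using g13_exists by blast
  obtain G4 where G4: "X ** G4 ** X = X" "cadj (G4 ** X) = G4 ** X" using g14_exists by blast
  define G where "G = G4 ** X ** G3"
  have e1: "X ** G ** X = X" unfolding G_def
    by (metis G3(1) G4(1) matrix_mul_assoc)
  have XG: "X ** G = X ** G3" unfolding G_def by (metis G4(1) matrix_mul_assoc)
  have GX: "G ** X = G4 ** X" unfolding G_def by (metis G3(1) matrix_mul_assoc)
  have e2: "G ** X ** G = G" unfolding G_def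
    by (metis G3(1) G4(1) matrix_mul_assoc)
  show ?thesis unfolding penrose_def
    apply (rule exI[of _ G]) using e1 e2 G3(2) G4(2) XG GX by metis
qed

lemma mp_unique:
  fixes X :: "complex^'n^'m"
  assumes G: "penrose {1,2,3,4} X G" and H: "penrose {1,2,3,4} X H"
  shows "G = H"
proof -
  have G1: "X ** G ** X = X" and G2: "G ** X ** G = G" and G3: "cadj (X ** G) = X ** G"
    and G4: "cadj (G ** X) = G ** X" using G by (auto simp: penrose_def)
  have H1: "X ** H ** X = X" and H2: "H ** X ** H = H" and H3: "cadj (X ** H) = X ** H"
    and H4: "cadj (H ** X) = H ** X" using H by (auto simp: penrose_def)
  have "G = G ** (X ** G)" using G2 by (simp add: matrix_mul_assoc)
  also have "\<dots> = G ** cadj G ** cadj X" using G3 by (metis cadj_mult matrix_mul_assoc)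
  also have "\<dots> = G ** cadj G ** cadj (X ** H ** X)" using H1 by simp
  also have "\<dots> = G ** (cadj (X ** G) ** cadj (X ** H))" by (simp add: cadj_mult matrix_mul_assoc)
  also have "\<dots> = G ** X ** H" using G3 H3 by (metis G1 matrix_mul_assoc)
  finally have a: "G = G ** X ** H" .
  have "H = (H ** X) ** H" using H2 by (simp add: matrix_mul_assoc)
  also have "\<dots> = cadj X ** cadj H ** H" using H4 by (metis cadj_mult)
  also have "\<dots> = cadj (X ** G ** X) ** cadj H ** H" using G1 by simp
  also have "\<dots> = (cadj (G ** X) ** cadj (H ** X)) ** H" by (simp add: cadj_mult matrix_mul_assoc)
  also have "\<dots> = G ** X ** H" using G4 H4 by (metis H1 matrix_mul_assoc)
  finally show ?thesis using a by simp
qed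

lemma mpinv_penrose: "penrose {1,2,3,4} X (mpinv X)"
  unfolding mpinv_def by (rule theI') (use mp_exists mp_unique in blast)

lemma mpinv_eqI: "penrose {1,2,3,4} X G \<Longrightarrow> mpinv X = G"
  using mp_unique mpinv_penrose by blast




lemma inv_props:
  fixes A :: "'a::semiring_1^'n^'n"
  assumes "invertible A"
  shows "A ** matrix_inv A = mat 1" "matrix_inv A ** A = mat 1"
proof -
  have "\<exists>A'. A ** A' = mat 1 \<and> A' ** A = mat 1" using assms by (simp add: invertible_def)
  from someI_ex[OF this] show "A ** matrix_inv A = mat 1" "matrix_inv A ** A = mat 1"
    by (simp_all add: matrix_inv_def)
qed



lemma conj_mult:
  fixes A W :: "complex^'m^'m"
  assumes "W ** A = mat 1"
  shows "(A ** X ** W) ** (A ** Y ** W) = A ** (X ** Y) ** W"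
proof -
  have "(A ** X ** W) ** (A ** Y ** W) = A ** X ** (W ** A) ** Y ** W"
    by (simp add: matrix_mul_assoc)
  thus ?thesis using assms by (simp add: matrix_mul_assoc)
qed



lemma conj_back:
  fixes A W :: "complex^'m^'m"
  assumes "A ** W = mat 1"
  shows "A ** (W ** H ** A) ** W = H"
proof -
  have "A ** (W ** H ** A) ** W = (A ** W) ** H ** (A ** W)"
    by (simp add: matrix_mul_assoc)
  thus ?thesis using assms by simp
qed



lemma conj_inj:
  fixes A W :: "complex^'m^'m"
  assumes "W ** A = mat 1" "A ** X ** W = A ** Y ** W"
  shows "X = Y"
proof -
  have "W ** (A ** X ** W) ** A = (W ** A) ** X ** (W ** A)"
    "W ** (A ** Y ** W) ** A = (W ** A) ** Y ** (W ** A)"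
    by (simp_all add: matrix_mul_assoc)
  hence "X = W ** (A ** X ** W) ** A" "Y = W ** (A ** Y ** W) ** A"
    using assms(1) by simp_all
  thus ?thesis using assms(2) by metis
qed



lemma penrose_conj:
  fixes A W B G :: "complex^'m^'m"
  assumes AW: "A ** W = mat 1" and WA: "W ** A = mat 1"
  shows "penrose S (A ** B ** W) (A ** G ** W) \<longleftrightarrow>
    (1 \<in> S \<longrightarrow> B ** G ** B = B) \<and> (2 \<in> S \<longrightarrow> G ** B ** G = G) \<and>
    (3 \<in> S \<longrightarrow> cadj (A ** (B ** G) ** W) = A ** (B ** G) ** W) \<and>
    (4 \<in> S \<longrightarrow> cadj (A ** (G ** B) ** W) = A ** (G ** B) ** W)"
proof -
  have e1: "(A ** B ** W) ** (A ** G ** W) ** (A ** B ** W) = A ** (B ** G ** B) ** W"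
    by (simp add: conj_mult[OF WA])
  have e2: "(A ** G ** W) ** (A ** B ** W) ** (A ** G ** W) = A ** (G ** B ** G) ** W"
    by (simp add: conj_mult[OF WA])
  have i1: "A ** (B ** G ** B) ** W = A ** B ** W \<longleftrightarrow> B ** G ** B = B"
    by (metis conj_inj[OF WA])
  have i2: "A ** (G ** B ** G) ** W = A ** G ** W \<longleftrightarrow> G ** B ** G = G"
    by (metis conj_inj[OF WA])
  show ?thesis unfolding penrose_def e1 e2 i1 i2 conj_mult[OF WA] by blast
qed



lemma hc_iff:
  fixes A W X :: "complex^'m^'m"
  assumes AW: "A ** W = mat 1" and WA: "W ** A = mat 1" and X: "cadj X = X"
  shows "cadj (A ** X ** W) = A ** X ** W \<longleftrightarrow> (cadj A ** A) ** X = X ** (cadj A ** A)"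
proof -
  have c1: "cadj A ** cadj W = mat 1" by (metis WA cadj_id cadj_mult)
  have c2: "cadj W ** cadj A = mat 1" by (metis AW cadj_id cadj_mult)
  have cd: "cadj (A ** X ** W) = cadj W ** X ** cadj A" by (simp add: cadj_mult X matrix_mul_assoc)
  show ?thesis unfolding cd
  proof
    assume h: "cadj W ** X ** cadj A = A ** X ** W"
    have "cadj A ** (cadj W ** X ** cadj A) ** A = cadj A ** (A ** X ** W) ** A" using h by simp
    moreover have "cadj A ** (cadj W ** X ** cadj A) ** A = (cadj A ** cadj W) ** X ** (cadj A ** A)"
      by (simp add: matrix_mul_assoc)
    moreover have "cadj A ** (A ** X ** W) ** A = (cadj A ** A) ** X ** (W ** A)"
      by (simp add: matrix_mul_assoc)
    ultimately show "(cadj A ** A) ** X = X ** (cadj A ** A)" using c1 WA by (simp add: matrix_mul_assoc)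
  next
    assume h: "(cadj A ** A) ** X = X ** (cadj A ** A)"
    have "cadj W ** (X ** (cadj A ** A)) ** W = cadj W ** ((cadj A ** A) ** X) ** W" using h by simp
    moreover have "cadj W ** (X ** (cadj A ** A)) ** W = cadj W ** X ** cadj A ** (A ** W)"
      by (simp add: matrix_mul_assoc)
    moreover have "cadj W ** ((cadj A ** A) ** X) ** W = (cadj W ** cadj A) ** A ** X ** W"
      by (simp add: matrix_mul_assoc)
    ultimately show "cadj W ** X ** cadj A = A ** X ** W" using c2 AW by (simp add: matrix_mul_assoc)
  qed
qed



lemma XG_eq:
  fixes X :: "complex^'n^'m"
  assumes "X ** G ** X = X" "cadj (X ** G) = X ** G"
  shows "X ** G = X ** mpinv X"
proof -
  let ?D = "mpinv X"
  have D: "X ** ?D ** X = X" "cadj (X ** ?D) = X ** ?D"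
    using mpinv_penrose[of X] by (auto simp: penrose_def)
  have "X ** G = (X ** ?D ** X) ** G" using D by simp
  also have "\<dots> = cadj (X ** ?D) ** cadj (X ** G)" using D assms by (simp add: matrix_mul_assoc)
  also have "\<dots> = cadj (X ** G ** X ** ?D)" by (simp add: cadj_mult matrix_mul_assoc)
  also have "\<dots> = X ** ?D" using assms D by simp
  finally show ?thesis .
qed



lemma GX_eq:
  fixes X :: "complex^'n^'m"
  assumes "X ** G ** X = X" "cadj (G ** X) = G ** X"
  shows "G ** X = mpinv X ** X"
proof -
  let ?D = "mpinv X"
  have D: "X ** ?D ** X = X" "cadj (?D ** X) = ?D ** X"
    using mpinv_penrose[of X] by (auto simp: penrose_def)
  have "G ** X = G ** (X ** ?D ** X)" by (simp only: D(1))
  also have "\<dots> = cadj (G ** X) ** cadj (?D ** X)" by (simp only: assms(2) D(2) matrix_mul_assoc)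
  also have "\<dots> = cadj (?D ** (X ** G ** X))" by (simp add: cadj_mult matrix_mul_assoc)
  also have "\<dots> = ?D ** X" using assms D by simp
  finally show ?thesis .
qed



lemma colspace_comm:
  fixes N Ni Pi :: "complex^'m^'m" and Y :: "complex^'k^'m" and Z :: "complex^'m^'k"
  assumes NNi: "N ** Ni = mat 1" and NiN: "Ni ** N = mat 1" and cN: "cadj N = N"
    and cP: "cadj Pi = Pi" and PYZ: "Pi = Y ** Z" and PY: "Pi ** Y = Y"
  shows "colspace (N ** Y) = colspace Y \<longleftrightarrow> N ** Pi = Pi ** N"
proof
  assume h: "colspace (N ** Y) = colspace Y"
  have "(N ** Y) *v v = (Pi ** N ** Y) *v v" for v
  proof -
    have "(N ** Y) *v v \<in> colspace Y" using h by (auto simp: colspace_def)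
    then obtain u where u: "(N ** Y) *v v = Y *v u" by (auto simp: colspace_def)
    have "(N ** Y) *v v = (Pi ** Y) *v u" using PY u by simp
    also have "\<dots> = Pi *v (Y *v u)" by (simp add: matrix_vector_mul_assoc)
    also have "\<dots> = Pi *v ((N ** Y) *v v)" using u by simp
    also have "\<dots> = (Pi ** N ** Y) *v v" by (simp add: matrix_vector_mul_assoc matrix_mul_assoc)
    finally show ?thesis .
  qed
  hence NY: "N ** Y = Pi ** N ** Y" by (simp add: matrix_eq)
  have "N ** Pi = (N ** Y) ** Z" using PYZ by (simp add: matrix_mul_assoc)
  also have "\<dots> = Pi ** N ** (Y ** Z)" by (subst NY) (simp add: matrix_mul_assoc)
  also have "\<dots> = Pi ** N ** Pi" using PYZ by simp
  finally have NP: "N ** Pi = Pi ** N ** Pi" .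
  have "Pi ** N = cadj (N ** Pi)" using cN cP by (simp add: cadj_mult)
  also have "\<dots> = cadj (Pi ** N ** Pi)" using NP by simp
  also have "\<dots> = Pi ** N ** Pi" using cN cP by (simp add: cadj_mult matrix_mul_assoc)
  finally show "N ** Pi = Pi ** N" using NP by simp
next
  assume h: "N ** Pi = Pi ** N"
  have hi: "Ni ** Pi = Pi ** Ni"
  proof -
    have "Ni ** Pi = Ni ** Pi ** (N ** Ni)" using NNi by simp
    also have "\<dots> = Ni ** (Pi ** N) ** Ni" by (simp add: matrix_mul_assoc)
    also have "\<dots> = Ni ** (N ** Pi) ** Ni" by (simp only: h)
    also have "\<dots> = (Ni ** N) ** Pi ** Ni" by (simp add: matrix_mul_assoc)
    finally show ?thesis using NiN by simp
  qed
  show "colspace (N ** Y) = colspace Y"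
  proof
    show "colspace (N ** Y) \<subseteq> colspace Y"
    proof
      fix x assume "x \<in> colspace (N ** Y)"
      then obtain v where v: "x = (N ** Y) *v v" by (auto simp: colspace_def)
      have "N ** Y = N ** (Pi ** Y)" using PY by simp
      also have "\<dots> = (N ** Pi) ** Y" by (simp add: matrix_mul_assoc)
      also have "\<dots> = (Pi ** N) ** Y" by (simp only: h)
      also have "\<dots> = (Y ** Z ** N) ** Y" by (simp only: PYZ)
      also have "\<dots> = Y ** (Z ** N ** Y)" by (simp add: matrix_mul_assoc)
      finally have "x = Y *v ((Z ** N ** Y) *v v)" using v by (simp add: matrix_vector_mul_assoc)
      thus "x \<in> colspace Y" by (auto simp: colspace_def)
    qed
  next
    show "colspace Y \<subseteq> colspace (N ** Y)"
    proof
      fix x assume "x \<in> colspace Y"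
      then obtain v where v: "x = Y *v v" by (auto simp: colspace_def)
      have "Y = (N ** Ni) ** Pi ** Y" using PY NNi by simp
      also have "\<dots> = N ** (Ni ** Pi) ** Y" by (simp add: matrix_mul_assoc)
      also have "\<dots> = N ** (Pi ** Ni) ** Y" by (simp only: hi)
      also have "\<dots> = N ** (Y ** Z ** Ni) ** Y" by (simp only: PYZ)
      also have "\<dots> = (N ** Y) ** (Z ** Ni ** Y)" by (simp add: matrix_mul_assoc)
      finally have "x = (N ** Y) *v ((Z ** Ni ** Y) *v v)" using v by (simp add: matrix_vector_mul_assoc)
      thus "x \<in> colspace (N ** Y)" by (auto simp: colspace_def)
    qed
  qed
qed





lemma penrose_unitary:
  fixes A B G :: "complex^'m^'m"
  assumes AW: "A ** cadj A = mat 1" and WA: "cadj A ** A = mat 1"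
  shows "penrose S (A ** B ** cadj A) (A ** G ** cadj A) \<longleftrightarrow> penrose S B G"
proof -
  have h: "cadj (A ** X ** cadj A) = A ** X ** cadj A \<longleftrightarrow> cadj X = X" for X :: "complex^'m^'m"
  proof -
    have "cadj (A ** X ** cadj A) = A ** cadj X ** cadj A" by (simp add: cadj_mult matrix_mul_assoc)
    thus ?thesis using conj_inj[OF WA] by metis
  qed
  show ?thesis unfolding penrose_conj[OF AW WA] h by (simp add: penrose_def)
qed

theorem corollary4p3:
  fixes A B :: "complex^'m^'m"
  assumes "invertible A"
  defines "M \<equiv> A ** B ** matrix_inv A"
  shows
   "(let P1 = (ginvs {1,3,4} M \<inter> (\<lambda>G. A ** G ** matrix_inv A) ` ginvs {1,3,4} B \<noteq> {});
         P2 = (ginvs {1,3,4} M = (\<lambda>G. A ** G ** matrix_inv A) ` ginvs {1,3,4} B);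
         P3 = (A ** mpinv B ** matrix_inv A \<in> ginvs {1,3,4} M);
         P4 = (mpinv M \<in> (\<lambda>G. A ** G ** matrix_inv A) ` ginvs {1,3,4} B);
         P5 = (mpinv M = A ** mpinv B ** matrix_inv A);
         P6 = (colspace (cadj A ** A ** B) = colspace B \<and>
               colspace (cadj A ** A ** cadj B) = colspace (cadj B))
     in (P1 \<longleftrightarrow> P2) \<and> (P1 \<longleftrightarrow> P3) \<and> (P1 \<longleftrightarrow> P4) \<and> (P1 \<longleftrightarrow> P5) \<and> (P1 \<longleftrightarrow> P6))
    \<and> (cadj A ** A = mat 1 \<longrightarrow>
        (\<forall>\<tau> \<in> {{1}, {1,2}, {1,3}, {1,4}, {1,2,3}, {1,2,4}, {1,3,4}}.
            ginvs \<tau> (A ** B ** cadj A) = (\<lambda>G. A ** G ** cadj A) ` ginvs \<tau> B)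
        \<and> mpinv (A ** B ** cadj A) = A ** mpinv B ** cadj A)"
  proof -
  define W where "W = matrix_inv A"
  have AW: "A ** W = mat 1" and WA: "W ** A = mat 1"
    using inv_props[OF assms(1)] by (simp_all add: W_def)
  have Meq: "M = A ** B ** W" by (simp add: M_def W_def)
  define Bd where "Bd = mpinv B"
  define P where "P = B ** Bd"
  define Q where "Q = Bd ** B"
  define N where "N = cadj A ** A"
  have Bd: "B ** Bd ** B = B" "Bd ** B ** Bd = Bd" "cadj (B ** Bd) = B ** Bd" "cadj (Bd ** B) = Bd ** B"
    using mpinv_penrose[of B] by (auto simp: penrose_def Bd_def)
  have cP: "cadj P = P" and cQ: "cadj Q = Q" using Bd by (simp_all add: P_def Q_def)
  have hcP: "cadj (A ** P ** W) = A ** P ** W \<longleftrightarrow> N ** P = P ** N"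
    using hc_iff[OF AW WA cP] by (simp add: N_def)
  have hcQ: "cadj (A ** Q ** W) = A ** Q ** W \<longleftrightarrow> N ** Q = Q ** N"
    using hc_iff[OF AW WA cQ] by (simp add: N_def)
  define C where "C \<longleftrightarrow> N ** P = P ** N \<and> N ** Q = Q ** N"
  have ginv134: "B ** G ** B = B \<and> B ** G = P \<and> G ** B = Q" if "G \<in> ginvs {1,3,4} B" for G
    using that XG_eq[of B G] GX_eq[of B G] by (auto simp: ginvs_def penrose_def P_def Q_def Bd_def)
  have Bd134: "Bd \<in> ginvs {1,3,4} B"
    using mpinv_penrose[of B] by (auto simp: ginvs_def penrose_def Bd_def)
  have conj134: "A ** G ** W \<in> ginvs {1,3,4} M \<longleftrightarrow> B ** G ** B = B \<and>
     cadj (A ** (B ** G) ** W) = A ** (B ** G) ** W \<and> cadj (A ** (G ** B) ** W) = A ** (G ** B) ** W" for G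
    unfolding ginvs_def Meq using penrose_conj[OF AW WA, of "{1,3,4}" B G] by simp
  have b: "A ** G ** W \<in> ginvs {1,3,4} M" if "C" "G \<in> ginvs {1,3,4} B" for G
    using that conj134[of G] ginv134[of G] hcP hcQ C_def by auto
  have C_P5: "mpinv M = A ** Bd ** W" if "C"
    apply (rule mpinv_eqI) unfolding Meq penrose_conj[OF AW WA]
    using that Bd hcP hcQ C_def P_def Q_def by auto
  have Md: "mpinv M \<in> ginvs {1,3,4} M" using mpinv_penrose[of M] by (auto simp: ginvs_def penrose_def)
  have P1_C: "C" if "ginvs {1,3,4} M \<inter> (\<lambda>G. A ** G ** W) ` ginvs {1,3,4} B \<noteq> {}"
  proof -
    from that obtain G where G: "G \<in> ginvs {1,3,4} B" "A ** G ** W \<in> ginvs {1,3,4} M" by blast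
    show ?thesis using conj134[of G] G ginv134[of G] hcP hcQ C_def by auto
  qed
  have c_sub: "ginvs {1,3,4} M \<subseteq> (\<lambda>G. A ** G ** W) ` ginvs {1,3,4} B" if "C"
  proof
    fix H assume H: "H \<in> ginvs {1,3,4} M"
    define G where "G = W ** H ** A"
    have HG: "H = A ** G ** W" using conj_back[OF AW] by (simp add: G_def)
    have G3: "B ** G ** B = B" "cadj (A ** (B ** G) ** W) = A ** (B ** G) ** W"
        "cadj (A ** (G ** B) ** W) = A ** (G ** B) ** W"
      using H conj134[of G] HG by auto
    have H1: "M ** H ** M = M" "cadj (M ** H) = M ** H" "cadj (H ** M) = H ** M"
      using H by (auto simp: ginvs_def penrose_def)
    have "M ** H = M ** mpinv M" using XG_eq[OF H1(1,2)] .
    hence "A ** (B ** G) ** W = A ** (B ** Bd) ** W"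
      using C_P5[OF that] by (simp add: Meq HG conj_mult[OF WA])
    hence BG: "B ** G = P" using conj_inj[OF WA] by (simp add: P_def)
    have "H ** M = mpinv M ** M" using GX_eq[OF H1(1,3)] .
    hence "A ** (G ** B) ** W = A ** (Bd ** B) ** W"
      using C_P5[OF that] by (simp add: Meq HG conj_mult[OF WA])
    hence GB: "G ** B = Q" using conj_inj[OF WA] by (simp add: Q_def)
    have "G \<in> ginvs {1,3,4} B" using G3(1) BG GB cP cQ by (simp add: ginvs_def penrose_def)
    thus "H \<in> (\<lambda>G. A ** G ** W) ` ginvs {1,3,4} B" using HG by blast
  qed
  have cN: "cadj N = N" by (simp add: N_def cadj_mult)
  have NNi: "N ** (W ** cadj W) = mat 1"
  proof -
    have "N ** (W ** cadj W) = cadj A ** (A ** W) ** cadj W" by (simp add: N_def matrix_mul_assoc)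
    also have "\<dots> = cadj (W ** A)" using AW by (simp add: cadj_mult)
    finally show ?thesis using WA by simp
  qed
  have NiN: "(W ** cadj W) ** N = mat 1"
  proof -
    have "(W ** cadj W) ** N = W ** cadj (A ** W) ** A" by (simp add: N_def matrix_mul_assoc cadj_mult)
    thus ?thesis using AW WA by simp
  qed
  have PB: "P ** B = B" using Bd(1) by (simp add: P_def)
  have Q2: "Q = cadj B ** cadj Bd" using cQ by (simp add: Q_def cadj_mult)
  have QB: "Q ** cadj B = cadj B"
  proof -
    have "Q ** cadj B = cadj (B ** Q)" using cQ by (simp add: cadj_mult)
    also have "B ** Q = B" using Bd(1) by (simp add: Q_def matrix_mul_assoc)
    finally show ?thesis .
  qed
  have P6_C: "(colspace (cadj A ** A ** B) = colspace B \<and>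
               colspace (cadj A ** A ** cadj B) = colspace (cadj B)) \<longleftrightarrow> C"
    unfolding C_def N_def[symmetric]
    using colspace_comm[OF NNi NiN cN cP P_def PB] colspace_comm[OF NNi NiN cN cQ Q2 QB] by simp
  have part1: "let P1 = (ginvs {1,3,4} M \<inter> (\<lambda>G. A ** G ** matrix_inv A) ` ginvs {1,3,4} B \<noteq> {});
         P2 = (ginvs {1,3,4} M = (\<lambda>G. A ** G ** matrix_inv A) ` ginvs {1,3,4} B);
         P3 = (A ** mpinv B ** matrix_inv A \<in> ginvs {1,3,4} M);
         P4 = (mpinv M \<in> (\<lambda>G. A ** G ** matrix_inv A) ` ginvs {1,3,4} B);
         P5 = (mpinv M = A ** mpinv B ** matrix_inv A);
         P6 = (colspace (cadj A ** A ** B) = colspace B \<and>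
               colspace (cadj A ** A ** cadj B) = colspace (cadj B))
     in (P1 \<longleftrightarrow> P2) \<and> (P1 \<longleftrightarrow> P3) \<and> (P1 \<longleftrightarrow> P4) \<and> (P1 \<longleftrightarrow> P5) \<and> (P1 \<longleftrightarrow> P6)"
  proof -
    let ?I = "(\<lambda>G. A ** G ** W) ` ginvs {1,3,4} B"
    have i1: "A ** Bd ** W \<in> ?I" using Bd134 by blast
    have e1: "ginvs {1,3,4} M \<inter> ?I \<noteq> {} \<longleftrightarrow> C"
    proof
      assume C
      thus "ginvs {1,3,4} M \<inter> ?I \<noteq> {}" using b[OF \<open>C\<close> Bd134] i1 by blast
    qed (rule P1_C)
    have e2: "ginvs {1,3,4} M = ?I \<longleftrightarrow> C"
    proof
      assume h: "ginvs {1,3,4} M = ?I"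
      show C by (rule P1_C) (use h Md in auto)
    next
      assume C
      show "ginvs {1,3,4} M = ?I" using c_sub[OF \<open>C\<close>] b[OF \<open>C\<close>] by blast
    qed
    have e3: "A ** Bd ** W \<in> ginvs {1,3,4} M \<longleftrightarrow> C"
    proof
      assume h: "A ** Bd ** W \<in> ginvs {1,3,4} M"
      show C by (rule P1_C) (use h i1 in blast)
    qed (rule b[OF _ Bd134])
    have e4: "mpinv M \<in> ?I \<longleftrightarrow> C"
    proof
      assume h: "mpinv M \<in> ?I"
      show C by (rule P1_C) (use h Md in blast)
    next
      assume C
      thus "mpinv M \<in> ?I" using C_P5 i1 by simp
    qed
    have e5: "mpinv M = A ** Bd ** W \<longleftrightarrow> C"
    proof
      assume h: "mpinv M = A ** Bd ** W"
      show C by (rule P1_C) (use h Md i1 in auto)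
    qed (rule C_P5)
    show ?thesis unfolding Let_def W_def[symmetric] Bd_def[symmetric]
      using e1 e2 e3 e4 e5 P6_C by simp
  qed
  have part2: "cadj A ** A = mat 1 \<longrightarrow>
        (\<forall>\<tau> \<in> {{1}, {1,2}, {1,3}, {1,4}, {1,2,3}, {1,2,4}, {1,3,4}}.
            ginvs \<tau> (A ** B ** cadj A) = (\<lambda>G. A ** G ** cadj A) ` ginvs \<tau> B)
        \<and> mpinv (A ** B ** cadj A) = A ** mpinv B ** cadj A"
  proof
    assume U: "cadj A ** A = mat 1"
    have "W = (cadj A ** A) ** W" using U by simp
    also have "\<dots> = cadj A" using AW by (simp add: matrix_mul_assoc[symmetric])
    finally have WcA: "W = cadj A" .
    have AcA: "A ** cadj A = mat 1" using AW WcA by simp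
    have all: "ginvs S (A ** B ** cadj A) = (\<lambda>G. A ** G ** cadj A) ` ginvs S B" for S
    proof
      show "ginvs S (A ** B ** cadj A) \<subseteq> (\<lambda>G. A ** G ** cadj A) ` ginvs S B"
      proof
        fix H assume H: "H \<in> ginvs S (A ** B ** cadj A)"
        have HG: "H = A ** (cadj A ** H ** A) ** cadj A" using conj_back[OF AcA] by simp
        have "cadj A ** H ** A \<in> ginvs S B"
          using H penrose_unitary[OF AcA U, of S B "cadj A ** H ** A"] HG by (simp add: ginvs_def)
        thus "H \<in> (\<lambda>G. A ** G ** cadj A) ` ginvs S B" using HG by blast
      qed
    next
      show "(\<lambda>G. A ** G ** cadj A) ` ginvs S B \<subseteq> ginvs S (A ** B ** cadj A)"
        using penrose_unitary[OF AcA U] by (auto simp: ginvs_def)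
    qed
    have "mpinv (A ** B ** cadj A) = A ** mpinv B ** cadj A"
      by (rule mpinv_eqI) (subst penrose_unitary[OF AcA U], rule mpinv_penrose)
    thus "(\<forall>\<tau> \<in> {{1}, {1,2}, {1,3}, {1,4}, {1,2,3}, {1,2,4}, {1,3,4}}.
            ginvs \<tau> (A ** B ** cadj A) = (\<lambda>G. A ** G ** cadj A) ` ginvs \<tau> B)
        \<and> mpinv (A ** B ** cadj A) = A ** mpinv B ** cadj A" using all by blast
  qed
  show ?thesis using part1 part2 by blast
qed


end
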